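(* Let $n\ge 2$, and consider words in the free monoid $F_n$ on the letters $g_i,g_i^{-1},e_i$ ($1\le i\le n-1$). A move $u\leftrightarrow v$ means replacing a contiguous subword equal to $u$ by $v$ or vice versa. Consider the moves, for $\epsilon\in\{+1,-1\}$ and $i,j\in\{1,\dots,n-1\}$: (M6) $g_i^{\epsilon}g_j^{\epsilon}e_i\leftrightarrow e_je_i$ for $|i-j|=1$; (M7) $e_ig_j^{\epsilon}g_i^{\epsilon}\leftrightarrow e_ie_j$ for $|i-j|=1$; (M20) $e_i\leftrightarrow g_i^{\epsilon}e_i$; (M21) $e_i\leftrightarrow e_ig_i^{\epsilon}$. Then the following moves are realized by finite sequences of the moves (M6), (M7), (M20), (M21): (a) $g_i^{\epsilon}g_j^{\epsilon}e_i\leftrightarrow e_jg_i^{\delta}g_j^{\delta}$ for all $\epsilon,\delta\in\{+1,-1\}$ and $|i-j|=1$; (b) $e_i\leftrightarrow g_i^{k}e_i$ for all $k\in\mathbb Z$; (c) $e_i\leftrightarrow e_ig_i^{k}$ for all $k\in\mathbb Z$.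
   Context: $F_n$ is the free monoid generated by the symbols $g_i,g_i^{-1},e_i$ ($i=1,\dots,n-1$). For $k>0$, $g_i^k$ denotes the word $g_i\cdots g_i$ ($k$ letters), $g_i^{-k}$ denotes $g_i^{-1}\cdots g_i^{-1}$ ($k$ letters), and $g_i^0$ is the empty word. *)

theory Defs
  imports Main
begin

datatype letter = G nat | Ginv nat | E nat

type_synonym word = "letter list"

fun idx :: "letter \<Rightarrow> nat" where
  "idx (G i) = i" | "idx (Ginv i) = i" | "idx (E i) = i"

definition in_Fn :: "nat \<Rightarrow> word \<Rightarrow> bool" where
  "in_Fn n w \<longleftrightarrow> (\<forall>a\<in>set w. 1 \<le> idx a \<and> idx a \<le> n - 1)"

definition gpow :: "nat \<Rightarrow> int \<Rightarrow> word" where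
  "gpow i k = (if 0 \<le> k then replicate (nat k) (G i) else replicate (nat (- k)) (Ginv i))"

definition basic_move :: "nat \<Rightarrow> word \<Rightarrow> word \<Rightarrow> bool" where
  "basic_move n l r \<longleftrightarrow>
    (\<exists>i j \<epsilon>. i \<in> {1..n-1} \<and> j \<in> {1..n-1} \<and> \<epsilon> \<in> {1, -1::int} \<and>
      ((\<bar>int i - int j\<bar> = 1 \<and> l = gpow i \<epsilon> @ gpow j \<epsilon> @ [E i] \<and> r = [E j, E i]) \<or>
       (\<bar>int i - int j\<bar> = 1 \<and> l = [E i] @ gpow j \<epsilon> @ gpow i \<epsilon> \<and> r = [E i, E j]) \<or>
       (l = [E i] \<and> r = gpow i \<epsilon> @ [E i]) \<or>
       (l = [E i] \<and> r = [E i] @ gpow i \<epsilon>)))"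

definition move_step :: "nat \<Rightarrow> word \<Rightarrow> word \<Rightarrow> bool" where
  "move_step n x y \<longleftrightarrow>
    (\<exists>p q l r. x = p @ l @ q \<and> y = p @ r @ q \<and> in_Fn n p \<and> in_Fn n q \<and>
      (basic_move n l r \<or> basic_move n r l))"

end

theory Submission
  imports Defs
begin

lemma ms: "basic_move n l r \<Longrightarrow> in_Fn n p \<Longrightarrow> in_Fn n q \<Longrightarrow> move_step n (p@l@q) (p@r@q)"
  unfolding move_step_def by blast

lemma inFn_G: "i \<in> {1..n-1} \<Longrightarrow> in_Fn n (replicate m (G i)) \<and> in_Fn n (replicate m (Ginv i))"
  unfolding in_Fn_def by auto

lemma bm3: "i \<in> {1..n-1} \<Longrightarrow> \<epsilon> \<in> {1, -1::int} \<Longrightarrow> basic_move n [E i] (gpow i \<epsilon> @ [E i])"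
  unfolding basic_move_def by blast

lemma bm4: "i \<in> {1..n-1} \<Longrightarrow> \<epsilon> \<in> {1, -1::int} \<Longrightarrow> basic_move n [E i] ([E i] @ gpow i \<epsilon>)"
  unfolding basic_move_def by blast

lemma pre_rep:
  assumes i: "i \<in> {1..n-1}" and a: "a = G i \<or> a = Ginv i"
  shows "(move_step n)\<^sup>*\<^sup>* [E i] (replicate m a @ [E i])"
proof (induction m)
  case 0 then show ?case by simp
next
  case (Suc m)
  obtain \<epsilon> where e: "\<epsilon> \<in> {1, -1::int}" "gpow i \<epsilon> = [a]"
  proof (cases "a = G i")
    case True then show ?thesis using that[of 1] by (simp add: gpow_def)
  next
    case False then show ?thesis using that[of "-1"] a by (simp add: gpow_def)
  qed
  have "move_step n (replicate m a @ [E i] @ []) (replicate m a @ (gpow i \<epsilon> @ [E i]) @ [])"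
  proof (rule ms[OF bm3[OF i e(1)]])
    show "in_Fn n (replicate m a)" using inFn_G[OF i] a by auto
  qed (simp add: in_Fn_def)
  then have "move_step n (replicate m a @ [E i]) (replicate (Suc m) a @ [E i])"
    using e(2) by (simp add: replicate_append_same[symmetric])
  with Suc show ?case by (rule rtranclp.rtrancl_into_rtrancl)
qed

lemma suf_rep:
  assumes i: "i \<in> {1..n-1}" and a: "a = G i \<or> a = Ginv i"
  shows "(move_step n)\<^sup>*\<^sup>* [E i] ([E i] @ replicate m a)"
proof (induction m)
  case 0 then show ?case by simp
next
  case (Suc m)
  obtain \<epsilon> where e: "\<epsilon> \<in> {1, -1::int}" "gpow i \<epsilon> = [a]"
  proof (cases "a = G i")
    case True then show ?thesis using that[of 1] by (simp add: gpow_def)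
  next
    case False then show ?thesis using that[of "-1"] a by (simp add: gpow_def)
  qed
  have "move_step n ([] @ [E i] @ replicate m a) ([] @ ([E i] @ gpow i \<epsilon>) @ replicate m a)"
  proof (rule ms[OF bm4[OF i e(1)]])
    show "in_Fn n (replicate m a)" using inFn_G[OF i] a by auto
  qed (simp add: in_Fn_def)
  then have "move_step n ([E i] @ replicate m a) ([E i] @ replicate (Suc m) a)"
    using e(2) by simp
  with Suc show ?case by (rule rtranclp.rtrancl_into_rtrancl)
qed

theorem lemma5p4:
  fixes n :: nat
  assumes "n \<ge> 2"
  shows "(\<forall>i j \<epsilon> \<delta>. i \<in> {1..n-1} \<and> j \<in> {1..n-1} \<and> \<bar>int i - int j\<bar> = 1 \<and>
            \<epsilon> \<in> {1, -1::int} \<and> \<delta> \<in> {1, -1::int} \<longrightarrow>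
            (move_step n)\<^sup>*\<^sup>* (gpow i \<epsilon> @ gpow j \<epsilon> @ [E i]) ([E j] @ gpow i \<delta> @ gpow j \<delta>))
       \<and> (\<forall>i (k::int). i \<in> {1..n-1} \<longrightarrow> (move_step n)\<^sup>*\<^sup>* [E i] (gpow i k @ [E i]))
       \<and> (\<forall>i (k::int). i \<in> {1..n-1} \<longrightarrow> (move_step n)\<^sup>*\<^sup>* [E i] ([E i] @ gpow i k))"
proof (intro conjI allI impI)
  fix i j \<epsilon> \<delta>
  assume h: "i \<in> {1..n-1} \<and> j \<in> {1..n-1} \<and> \<bar>int i - int j\<bar> = 1 \<and>
            \<epsilon> \<in> {1, -1::int} \<and> \<delta> \<in> {1, -1::int}"
  have e: "in_Fn n []" by (simp add: in_Fn_def)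
  have b1: "basic_move n (gpow i \<epsilon> @ gpow j \<epsilon> @ [E i]) [E j, E i]"
    unfolding basic_move_def using h by blast
  have b2: "basic_move n ([E j] @ gpow i \<delta> @ gpow j \<delta>) [E j, E i]"
    unfolding basic_move_def using h by (intro exI[of _ j] exI[of _ i] exI[of _ \<delta>]) auto
  have s1: "move_step n (gpow i \<epsilon> @ gpow j \<epsilon> @ [E i]) [E j, E i]"
    using ms[OF b1 e e] by simp
  have s2: "move_step n [E j, E i] ([E j] @ gpow i \<delta> @ gpow j \<delta>)"
    using e unfolding move_step_def using b2
    by (metis append.right_neutral append_Nil)
  show "(move_step n)\<^sup>*\<^sup>* (gpow i \<epsilon> @ gpow j \<epsilon> @ [E i]) ([E j] @ gpow i \<delta> @ gpow j \<delta>)"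
    using s1 s2 by (meson rtranclp.rtrancl_into_rtrancl rtranclp.rtrancl_refl)
next
  fix i k assume i: "i \<in> {1..n-1}"
  show "(move_step n)\<^sup>*\<^sup>* [E i] (gpow i k @ [E i])"
    unfolding gpow_def using pre_rep[OF i] by simp
next
  fix i k assume i: "i \<in> {1..n-1}"
  show "(move_step n)\<^sup>*\<^sup>* [E i] ([E i] @ gpow i k)"
    unfolding gpow_def using suf_rep[OF i] by simp
qed

end
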